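(* If $\mathrm{char}(\Bbbk)=0$ or $\mathrm{char}(\Bbbk)\ge5$, then $F=\{f_1,f_2,f_3,f_4\}$, where $f_1=3y^3-4xyz+x^4-3y^3z^5-2xy^6z^2-x^2y^4z^3$, $f_2=2y^2z-3xz^2+x^3y-2y^7z^2-xy^5z^3$, $f_3=yz^2-3x^2y^2+2x^3z-y^6z^3-2xy^4z^4$, $f_4=z^3-2xy^3+x^2yz-y^5z^4$, is a standard basis of $P$ with respect to the negative degree reverse lexicographic order $>_{\rm ds}$.
   Context: $\Bbbk$ is a field, $\rho:\Bbbk[[x,y,z]]\to\Bbbk[[t]]$ is the $\Bbbk$-algebra morphism with $\rho(x)=t^6+t^{31}$, $\rho(y)=t^8$, $\rho(z)=t^{10}$, and $P=\ker\rho$. The order $>_{\rm ds}$ on monomials $x^\alpha=x^{\alpha_1}y^{\alpha_2}z^{\alpha_3}$: $x^\alpha>_{\rm ds}x^\beta$ iff $|\alpha|<|\beta|$, or $|\alpha|=|\beta|$ and there is $i\in\{1,2\}$ with $\alpha_3=\beta_3,\ldots,\alpha_{i+1}=\beta_{i+1}$ and $\alpha_i<\beta_i$ (so $1>x>y>z>x^2>xy>y^2>xz>yz>z^2>\cdots$). For $0\ne f\in\Bbbk[[x,y,z]]$, the leading monomial $\mathrm{LM}(f)$ is the $>_{\rm ds}$-largest monomial in the support of $f$. A finite set $G\subseteq I$ is a standard basis of an ideal $I\subseteq\Bbbk[[x,y,z]]$ if the ideal generated by $\{\mathrm{LM}(g):g\in G,g\neq0\}$ equals the ideal generated by $\{\mathrm{LM}(f):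 f\in I, f\ne0\}$. *)

theory Defs
  imports "HOL-Computational_Algebra.Formal_Power_Series"
begin

text \<open>The power series ring k[[x,y,z]] is modelled as the nested formal power series
  type ('a fps) fps fps: the outermost index is the exponent of z, the middle one of y,
  the innermost one of x.\<close>

type_synonym 'a ps3 = "'a fps fps fps"

definition vx :: "'a::comm_ring_1 ps3" where "vx = fps_const (fps_const fps_X)"
definition vy :: "'a::comm_ring_1 ps3" where "vy = fps_const fps_X"
definition vz :: "'a::comm_ring_1 ps3" where "vz = fps_X"

definition coeff3 :: "'a::comm_ring_1 ps3 \<Rightarrow> nat \<times> nat \<times> nat \<Rightarrow> 'a" where
  "coeff3 f \<alpha> = (case \<alpha> of (a, b, c) \<Rightarrow> fps_nth (fps_nth (fps_nth f c) b) a)"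

definition mon3 :: "nat \<times> nat \<times> nat \<Rightarrow> 'a::comm_ring_1 ps3" where
  "mon3 \<alpha> = (case \<alpha> of (a, b, c) \<Rightarrow> vx ^ a * vy ^ b * vz ^ c)"

text \<open>The substitution morphism rho: x \<mapsto> t^6+t^31, y \<mapsto> t^8, z \<mapsto> t^10.
  Monomial x^a y^b z^c maps to a series of order 6a+8b+10c \<ge> a+b+c, so only
  exponents a,b,c \<le> n contribute to the coefficient of t^n.\<close>
definition rho :: "'a::comm_ring_1 ps3 \<Rightarrow> 'a fps" where
  "rho f = Abs_fps (\<lambda>n. \<Sum>a\<le>n. \<Sum>b\<le>n. \<Sum>c\<le>n.
      coeff3 f (a, b, c) * fps_nth ((fps_X ^ 6 + fps_X ^ 31) ^ a * fps_X ^ (8 * b) * fps_X ^ (10 * c)) n)"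

definition Pker :: "'a::comm_ring_1 ps3 set" where
  "Pker = {f. rho f = 0}"

text \<open>Negative degree reverse lexicographic order: ds_gr \<alpha> \<beta> means x^\<alpha> >_ds x^\<beta>.\<close>
definition ds_gr :: "nat \<times> nat \<times> nat \<Rightarrow> nat \<times> nat \<times> nat \<Rightarrow> bool" where
  "ds_gr \<alpha> \<beta> = (case \<alpha> of (a1, a2, a3) \<Rightarrow> case \<beta> of (b1, b2, b3) \<Rightarrow>
      a1 + a2 + a3 < b1 + b2 + b3 \<or>
      (a1 + a2 + a3 = b1 + b2 + b3 \<and>
        (a3 < b3 \<or> (a3 = b3 \<and> a2 < b2) \<or> (a3 = b3 \<and> a2 = b2 \<and> a1 < b1))))"

definition LE3 :: "'a::comm_ring_1 ps3 \<Rightarrow> nat \<times> nat \<times> nat" where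
  "LE3 f = (THE \<alpha>. coeff3 f \<alpha> \<noteq> 0 \<and> (\<forall>\<beta>. coeff3 f \<beta> \<noteq> 0 \<and> \<beta> \<noteq> \<alpha> \<longrightarrow> ds_gr \<alpha> \<beta>))"

definition LM3 :: "'a::comm_ring_1 ps3 \<Rightarrow> 'a ps3" where
  "LM3 f = mon3 (LE3 f)"

definition ideal_gen :: "'a::comm_ring_1 set \<Rightarrow> 'a set" where
  "ideal_gen S = module.span ((*) :: 'a \<Rightarrow> 'a \<Rightarrow> 'a) S"

definition standard_basis :: "'a::comm_ring_1 ps3 set \<Rightarrow> 'a ps3 set \<Rightarrow> bool" where
  "standard_basis G I \<longleftrightarrow> finite G \<and> G \<subseteq> I \<and>
     ideal_gen {LM3 g | g. g \<in> G \<and> g \<noteq> 0} = ideal_gen {LM3 f | f. f \<in> I \<and> f \<noteq> 0}"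

definition f1 :: "'a::comm_ring_1 ps3" where
  "f1 = 3 * vy^3 - 4 * vx * vy * vz + vx^4 - 3 * vy^3 * vz^5 - 2 * vx * vy^6 * vz^2
        - vx^2 * vy^4 * vz^3"
definition f2 :: "'a::comm_ring_1 ps3" where
  "f2 = 2 * vy^2 * vz - 3 * vx * vz^2 + vx^3 * vy - 2 * vy^7 * vz^2 - vx * vy^5 * vz^3"
definition f3 :: "'a::comm_ring_1 ps3" where
  "f3 = vy * vz^2 - 3 * vx^2 * vy^2 + 2 * vx^3 * vz - vy^6 * vz^3 - 2 * vx * vy^4 * vz^4"
definition f4 :: "'a::comm_ring_1 ps3" where
  "f4 = vz^3 - 2 * vx * vy^3 + vx^2 * vy * vz - vy^5 * vz^4"

end

theory Submission
  imports Defs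
begin


definition EE :: "nat \<Rightarrow> nat \<Rightarrow> 'a::comm_ring_1" where
  "EE a j = fps_nth ((1 + fps_X ^ 25) ^ a) j"

lemma EE_Suc: "(EE (Suc a) j :: 'a::comm_ring_1) = EE a j + (if 25 \<le> j then EE a (j - 25) else 0)"
proof -
  have "(1 + fps_X ^ 25) ^ Suc a = (1 + fps_X ^ 25) ^ a + fps_X ^ 25 * ((1::'a fps) + fps_X ^ 25) ^ a"
    by (simp add: algebra_simps)
  then show ?thesis unfolding EE_def by (simp add: fps_X_power_mult_nth)
qed

lemma EE_0: "EE a 0 = 1"
  by (simp add: EE_def fps_nth_power_0)

lemma EE_small: "0 < j \<Longrightarrow> j < 25 \<Longrightarrow> EE a j = 0"
  by (induction a) (auto simp: EE_Suc, simp add: EE_def)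

lemma EE_dvd: "(EE a j :: 'a::comm_ring_1) \<noteq> 0 \<Longrightarrow> 25 dvd j"
proof (induction a arbitrary: j)
  case 0 then show ?case by (auto simp: EE_def split: if_splits)
next
  case (Suc a)
  from Suc.prems have "EE a j \<noteq> (0::'a) \<or> (25 \<le> j \<and> EE a (j - 25) \<noteq> (0::'a))"
    by (auto simp: EE_Suc split: if_splits)
  then show ?case
  proof
    assume "EE a j \<noteq> (0::'a)" then show ?thesis by (rule Suc.IH)
  next
    assume h: "25 \<le> j \<and> EE a (j - 25) \<noteq> (0::'a)"
    then have "25 dvd (j - 25)" using Suc.IH by blast
    moreover have "j = (j - 25) + 25" using h by simp
    ultimately show ?thesis by (metis dvd_add dvd_refl)
  qed
qed

lemma EE_25: "EE a 25 = of_nat a"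
  by (induction a) (auto simp: EE_Suc EE_0, simp add: EE_def)

definition ww :: "nat \<times> nat \<times> nat \<Rightarrow> nat \<Rightarrow> 'a::comm_ring_1" where
  "ww \<alpha> n = (case \<alpha> of (a, b, c) \<Rightarrow> fps_nth ((fps_X ^ 6 + fps_X ^ 31) ^ a * fps_X ^ (8 * b) * fps_X ^ (10 * c)) n)"

lemma M_eq: "(fps_X ^ 6 + fps_X ^ 31) ^ a * fps_X ^ (8 * b) * fps_X ^ (10 * c)
     = fps_X ^ (6*a+8*b+10*c) * ((1::'a::comm_ring_1 fps) + fps_X ^ 25) ^ a"
proof -
  have "(fps_X ^ 6 + fps_X ^ 31) = fps_X ^ 6 * ((1::'a fps) + fps_X ^ 25)"
    by (simp add: algebra_simps flip: power_add)
  then have "(fps_X ^ 6 + fps_X ^ 31) ^ a = fps_X ^ (6*a) * ((1::'a fps) + fps_X ^ 25) ^ a"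
    by (simp add: power_mult_distrib power_mult)
  then show ?thesis by (simp add: power_add mult_ac)
qed

lemma ww_eq: "ww (a, b, c) n = (if 6*a+8*b+10*c \<le> n then EE a (n - (6*a+8*b+10*c)) else 0)"
  unfolding ww_def EE_def M_eq prod.case by (simp add: fps_X_power_mult_nth)

definition cube :: "nat \<Rightarrow> (nat \<times> nat \<times> nat) set" where
  "cube n = {..n} \<times> {..n} \<times> {..n}"

lemma rho_nth: "fps_nth (rho f) n = (\<Sum>\<alpha>\<in>cube n. coeff3 f \<alpha> * ww \<alpha> n)"
  unfolding rho_def cube_def ww_def
  by (simp add: sum.cartesian_product split_def)

lemma ww_out: "\<alpha> \<notin> cube n \<Longrightarrow> ww \<alpha> n = 0"
  by (cases \<alpha>) (auto simp: cube_def ww_eq)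

lemma rho_local:
  assumes "finite A" and "\<And>\<alpha>. coeff3 f \<alpha> * ww \<alpha> n \<noteq> 0 \<Longrightarrow> \<alpha> \<in> A"
  shows "fps_nth (rho f) n = (\<Sum>\<alpha>\<in>A. coeff3 f \<alpha> * ww \<alpha> n)"
proof -
  have fc: "finite (cube n)" by (simp add: cube_def)
  have "(\<Sum>\<alpha>\<in>cube n. coeff3 f \<alpha> * ww \<alpha> n) = (\<Sum>\<alpha>\<in>cube n \<union> A. coeff3 f \<alpha> * ww \<alpha> n)"
    using fc assms(1) by (intro sum.mono_neutral_left) (auto simp: ww_out)
  also have "\<dots> = (\<Sum>\<alpha>\<in>A. coeff3 f \<alpha> * ww \<alpha> n)"
    by (rule sum.mono_neutral_right) (use fc assms in auto)
  finally show ?thesis by (simp add: rho_nth)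
qed

lemma ds_gr_asym: "ds_gr a b \<Longrightarrow> \<not> ds_gr b a"
  by (cases a; cases b) (auto simp: ds_gr_def)

lemma coeff3_nonzero: "f \<noteq> 0 \<Longrightarrow> \<exists>\<alpha>. coeff3 f \<alpha> \<noteq> 0"
proof -
  assume "f \<noteq> 0"
  then obtain c where "fps_nth f c \<noteq> 0" using fps_ext by (metis fps_zero_nth)
  then obtain b where "fps_nth (fps_nth f c) b \<noteq> 0" using fps_ext by (metis fps_zero_nth)
  then obtain a where "fps_nth (fps_nth (fps_nth f c) b) a \<noteq> 0" using fps_ext by (metis fps_zero_nth)
  then show ?thesis by (auto simp: coeff3_def)
qed

definition LEP :: "'a::comm_ring_1 ps3 \<Rightarrow> nat \<times> nat \<times> nat \<Rightarrow> bool" where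
  "LEP f \<alpha> \<longleftrightarrow> coeff3 f \<alpha> \<noteq> 0 \<and> (\<forall>\<beta>. coeff3 f \<beta> \<noteq> 0 \<and> \<beta> \<noteq> \<alpha> \<longrightarrow> ds_gr \<alpha> \<beta>)"

lemma LEP_unique: "LEP f \<alpha> \<Longrightarrow> LEP f \<beta> \<Longrightarrow> \<alpha> = \<beta>"
  unfolding LEP_def using ds_gr_asym by blast

lemma LE3_eq:
  assumes "LEP f \<alpha>" shows "LE3 f = \<alpha>"
proof -
  have "LE3 f = (THE \<alpha>. LEP f \<alpha>)" unfolding LE3_def LEP_def ..
  also have "\<dots> = \<alpha>"
  proof (rule the_equality)
    show "LEP f \<alpha>" by (rule assms)
    fix \<beta> assume "LEP f \<beta>" then show "\<beta> = \<alpha>" using LEP_unique assms by blast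
  qed
  finally show ?thesis .
qed

lemma LEP_exists:
  assumes "f \<noteq> 0" shows "\<exists>\<alpha>. LEP f \<alpha>"
proof -
  define S where "S = {\<alpha>. coeff3 f \<alpha> \<noteq> 0}"
  have "S \<noteq> {}" using coeff3_nonzero[OF assms] by (auto simp: S_def)
  define deg :: "nat \<times> nat \<times> nat \<Rightarrow> nat" where "deg = (\<lambda>(a,b,c). a+b+c)"
  obtain d where d: "\<exists>\<alpha>\<in>S. deg \<alpha> = d" "\<And>e. e < d \<Longrightarrow> \<not>(\<exists>\<alpha>\<in>S. deg \<alpha> = e)"
    using exists_least_iff[of "\<lambda>d. \<exists>\<alpha>\<in>S. deg \<alpha> = d"] \<open>S \<noteq> {}\<close> by blast
  obtain c0 where c0: "\<exists>\<alpha>\<in>S. deg \<alpha> = d \<and> snd (snd \<alpha>) = c0"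
     "\<And>e. e < c0 \<Longrightarrow> \<not>(\<exists>\<alpha>\<in>S. deg \<alpha> = d \<and> snd (snd \<alpha>) = e)"
    using exists_least_iff[of "\<lambda>c. \<exists>\<alpha>\<in>S. deg \<alpha> = d \<and> snd (snd \<alpha>) = c"] d(1) by blast
  obtain b0 where b0: "\<exists>\<alpha>\<in>S. deg \<alpha> = d \<and> snd (snd \<alpha>) = c0 \<and> fst (snd \<alpha>) = b0"
     "\<And>e. e < b0 \<Longrightarrow> \<not>(\<exists>\<alpha>\<in>S. deg \<alpha> = d \<and> snd (snd \<alpha>) = c0 \<and> fst (snd \<alpha>) = e)"
    using exists_least_iff[of "\<lambda>b. \<exists>\<alpha>\<in>S. deg \<alpha> = d \<and> snd (snd \<alpha>) = c0 \<and> fst (snd \<alpha>) = b"] c0(1) by blast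
  obtain \<alpha> where \<alpha>: "\<alpha> \<in> S" "deg \<alpha> = d" "snd (snd \<alpha>) = c0" "fst (snd \<alpha>) = b0" using b0(1) by blast
  have "LEP f \<alpha>"
    unfolding LEP_def
  proof (intro conjI allI impI)
    show "coeff3 f \<alpha> \<noteq> 0" using \<alpha> by (simp add: S_def)
  next
    fix \<beta> assume h: "coeff3 f \<beta> \<noteq> 0 \<and> \<beta> \<noteq> \<alpha>"
    then have "\<beta> \<in> S" by (simp add: S_def)
    obtain p q r where \<beta>: "\<beta> = (p,q,r)" by (cases \<beta>) auto
    obtain a1 a2 a3 where aa: "\<alpha> = (a1,a2,a3)" by (cases \<alpha>) auto
    have bb: "deg \<beta> = p+q+r" "snd (snd \<beta>) = r" "fst (snd \<beta>) = q" by (simp_all add: \<beta> deg_def)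
    have 1: "\<not> p+q+r < d" using d(2)[of "p+q+r"] \<open>\<beta> \<in> S\<close> bb by blast
    have 2: "p+q+r = d \<Longrightarrow> \<not> r < c0" using c0(2)[of r] \<open>\<beta> \<in> S\<close> bb by blast
    have 3: "p+q+r = d \<Longrightarrow> r = c0 \<Longrightarrow> \<not> q < b0" using b0(2)[of q] \<open>\<beta> \<in> S\<close> bb by blast
    show "ds_gr \<alpha> \<beta>" using 1 2 3 \<alpha>(2-4) h unfolding \<beta> aa ds_gr_def deg_def by auto
  qed
  then show ?thesis by blast
qed

lemma LE3_prop: "f \<noteq> 0 \<Longrightarrow> LEP f (LE3 f)"
  using LEP_exists LE3_eq by metis


lemma coeff3_add: "coeff3 (f + g) \<alpha> = coeff3 f \<alpha> + coeff3 g \<alpha>"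
  by (cases \<alpha>) (simp add: coeff3_def)
lemma coeff3_diff: "coeff3 (f - g) \<alpha> = coeff3 f \<alpha> - coeff3 g \<alpha>"
  by (cases \<alpha>) (simp add: coeff3_def)
lemma coeff3_numeral: "coeff3 (numeral k * f) \<alpha> = numeral k * coeff3 f \<alpha>"
  by (cases \<alpha>) (simp add: coeff3_def numeral_fps_const fps_mult_left_const_nth)
lemma coeff3_zero: "coeff3 0 \<alpha> = 0"
  by (cases \<alpha>) (simp add: coeff3_def)

lemma rho_add: "rho (f + g) = rho f + rho g"
  by (rule fps_ext) (simp add: rho_nth coeff3_add algebra_simps sum.distrib)
lemma rho_diff: "rho (f - g) = rho f - rho g"
  by (rule fps_ext) (simp add: rho_nth coeff3_diff algebra_simps sum_subtractf)
lemma fps_numeral_nth: "fps_nth (numeral k * g) n = numeral k * fps_nth g n"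
  by (simp add: numeral_fps_const fps_mult_left_const_nth)
lemma rho_numeral: "rho (numeral k * f) = numeral k * rho f"
  apply (rule fps_ext)
  unfolding rho_nth coeff3_numeral fps_numeral_nth
  by (simp add: sum_distrib_left mult.assoc)

lemma mon3_alt: "(mon3 (a,b,c) :: 'a::comm_ring_1 ps3) = fps_X ^ c * fps_const (fps_const (fps_X ^ a) * fps_X ^ b)"
proof -
  have 1: "(vx :: 'a ps3) ^ a = fps_const (fps_const (fps_X ^ a))" by (simp add: vx_def fps_const_power)
  have 2: "(vy :: 'a ps3) ^ b = fps_const (fps_X ^ b)" by (simp add: vy_def fps_const_power)
  have "(mon3 (a,b,c) :: 'a ps3) = fps_const (fps_const (fps_X ^ a)) * fps_const (fps_X ^ b) * fps_X ^ c"
    by (simp add: mon3_def 1 2 vz_def)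
  also have "\<dots> = fps_X ^ c * fps_const (fps_const (fps_X ^ a) * fps_X ^ b)"
    by (simp only: fps_const_mult mult.commute)
  finally show ?thesis .
qed
lemma coeff3_mon3: "coeff3 (mon3 \<beta> :: 'a::comm_ring_1 ps3) \<alpha> = (if \<alpha> = \<beta> then 1 else 0)"
proof -
  obtain a b c where \<beta>: "\<beta> = (a,b,c)" by (cases \<beta>) auto
  obtain p q r where \<alpha>: "\<alpha> = (p,q,r)" by (cases \<alpha>) auto
  have A: "fps_nth (mon3 (a,b,c) :: 'a ps3) r = (if r = c then fps_const (fps_X ^ a) * fps_X ^ b else 0)"
    unfolding mon3_alt fps_X_power_mult_nth by simp
  have B: "fps_nth (fps_const (fps_X ^ a) * fps_X ^ b :: 'a fps fps) q = (if q = b then fps_X ^ a else 0)"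
    unfolding fps_mult_left_const_nth fps_X_power_nth by simp
  show ?thesis unfolding \<alpha> \<beta> coeff3_def using A B by (simp add: fps_X_power_nth)
qed

lemma rho_mon3: "rho (mon3 (a,b,c) :: 'a::comm_ring_1 ps3) = (fps_X ^ 6 + fps_X ^ 31) ^ a * fps_X ^ (8 * b) * fps_X ^ (10 * c)"
proof (rule fps_ext)
  fix n
  have "fps_nth (rho (mon3 (a,b,c) :: 'a ps3)) n = (\<Sum>\<alpha>\<in>cube n. (if \<alpha> = (a,b,c) then ww (a,b,c) n else 0))"
  proof -
    have "\<And>\<alpha>. coeff3 (mon3 (a,b,c) :: 'a ps3) \<alpha> * ww \<alpha> n = (if \<alpha> = (a,b,c) then ww (a,b,c) n else 0)"
      by (simp add: coeff3_mon3)
    then show ?thesis by (simp add: rho_nth)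
  qed
  also have "\<dots> = (if (a,b,c) \<in> cube n then ww (a,b,c) n else 0)"
    by (rule sum.delta) (simp add: cube_def)
  also have "\<dots> = ww (a,b,c) n" using ww_out[of "(a,b,c)" n] by auto
  finally have "fps_nth (rho (mon3 (a,b,c) :: 'a ps3)) n = ww (a,b,c) n" .
  then show "fps_nth (rho (mon3 (a,b,c) :: 'a ps3)) n = fps_nth ((fps_X ^ 6 + fps_X ^ 31) ^ a * fps_X ^ (8 * b) * fps_X ^ (10 * c)) n"
    by (simp only: ww_def prod.case)
qed

lemma rho_mon3': "rho (mon3 (a,b,c) :: 'a::comm_ring_1 ps3) = fps_X ^ (6*a+8*b+10*c) * (1 + fps_X ^ 25) ^ a"
  unfolding rho_mon3 M_eq ..


lemma dv25: "25 dvd (j::nat) \<Longrightarrow> j = 0 \<or> j = 25 \<or> 50 \<le> j"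
proof -
  assume "25 dvd j" then obtain k where "j = 25*k" by (elim dvdE)
  then show ?thesis by (cases "k \<le> 1") auto
qed
lemma ds_deg: "(p,q,r) = (a,b,c) \<or> ds_gr (a,b,c) (p,q,r) \<Longrightarrow> a+b+c \<le> p+q+r"
  unfolding ds_gr_def by auto
lemma par: "6*p+8*q+10*(r::nat) \<noteq> 2*m+1" by presburger

lemma ar20: assumes "((p,q,r) = (a,2,0) \<or> ds_gr (a,2,0) (p,q,r))" "6*p+8*q+10*r \<le> n" "25 dvd (n - (6*p+8*q+10*r))"
  "n = 6*a+16 \<or> n = 6*a+41" shows "(p,q,r) = (a,2,0) \<or> (p,q,r) = (a+1,0,1)"
proof -
  have d: "a+2 \<le> p+q+r" using ds_deg[OF assms(1)] by simp
  have N: "6*p+8*q+10*r = 6*a+16"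
    using dv25[OF assms(3)] assms(2,4) d par[of p q r "3*a+20"] by auto
  then have "q \<in> {0,1,2,3,4}" "r \<in> {0,1,2}" using d by auto
  then show ?thesis using assms(1) N unfolding ds_gr_def by (auto; presburger)
qed
lemma ar11: assumes "((p,q,r) = (a,1,1) \<or> ds_gr (a,1,1) (p,q,r))" "6*p+8*q+10*r \<le> n" "25 dvd (n - (6*p+8*q+10*r))"
  "n = 6*a+18 \<or> n = 6*a+43" shows "(p,q,r) = (a,1,1) \<or> (p,q,r) = (a+3,0,0)"
proof -
  have d: "a+2 \<le> p+q+r" using ds_deg[OF assms(1)] by simp
  have N: "6*p+8*q+10*r = 6*a+18"
    using dv25[OF assms(3)] assms(2,4) d par[of p q r "3*a+21"] by auto
  then have "q \<in> {0,1,2,3,4}" "r \<in> {0,1,2}" using d by auto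
  then show ?thesis using assms(1) N unfolding ds_gr_def by (auto; presburger)
qed
lemma ar02: assumes "((p,q,r) = (a,0,2) \<or> ds_gr (a,0,2) (p,q,r))" "6*p+8*q+10*r \<le> n" "25 dvd (n - (6*p+8*q+10*r))"
  "n = 6*a+20 \<or> n = 6*a+45" shows "(p,q,r) = (a,0,2) \<or> (p,q,r) = (a+2,1,0)"
proof -
  have d: "a+2 \<le> p+q+r" using ds_deg[OF assms(1)] by simp
  have N: "6*p+8*q+10*r = 6*a+20"
    using dv25[OF assms(3)] assms(2,4) d par[of p q r "3*a+22"] by auto
  then have "q \<in> {0,1,2,3,4}" "r \<in> {0,1,2}" using d by auto
  then show ?thesis using assms(1) N unfolding ds_gr_def by (auto; presburger)
qed
lemma ar00: assumes "((p,q,r) = (a,0,0) \<or> ds_gr (a,0,0) (p,q,r))" "6*p+8*q+10*r \<le> n" "25 dvd (n - (6*p+8*q+10*r))"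
  "n = 6*a" shows "(p,q,r) = (a,0,0)"
proof -
  have d: "a+0 \<le> p+q+r" using ds_deg[OF assms(1)] by simp
  have N: "6*p+8*q+10*r = 6*a"
    using dv25[OF assms(3)] assms(2,4) d by auto
  then have "q \<in> {0,1,2,3,4}" "r \<in> {0,1,2}" using d by auto
  then show ?thesis using assms(1) N unfolding ds_gr_def by (auto; presburger)
qed
lemma ar10: assumes "((p,q,r) = (a,1,0) \<or> ds_gr (a,1,0) (p,q,r))" "6*p+8*q+10*r \<le> n" "25 dvd (n - (6*p+8*q+10*r))"
  "n = 6*a+8" shows "(p,q,r) = (a,1,0)"
proof -
  have d: "a+1 \<le> p+q+r" using ds_deg[OF assms(1)] by simp
  have N: "6*p+8*q+10*r = 6*a+8"
    using dv25[OF assms(3)] assms(2,4) d by auto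
  then have "q \<in> {0,1,2,3,4}" "r \<in> {0,1,2}" using d by auto
  then show ?thesis using assms(1) N unfolding ds_gr_def by (auto; presburger)
qed
lemma ar01: assumes "((p,q,r) = (a,0,1) \<or> ds_gr (a,0,1) (p,q,r))" "6*p+8*q+10*r \<le> n" "25 dvd (n - (6*p+8*q+10*r))"
  "n = 6*a+10" shows "(p,q,r) = (a,0,1)"
proof -
  have d: "a+1 \<le> p+q+r" using ds_deg[OF assms(1)] by simp
  have N: "6*p+8*q+10*r = 6*a+10"
    using dv25[OF assms(3)] assms(2,4) d by auto
  then have "q \<in> {0,1,2,3,4}" "r \<in> {0,1,2}" using d by auto
  then show ?thesis using assms(1) N unfolding ds_gr_def by (auto; presburger)
qed

lemma main_LE:
  fixes f :: "'a::field ps3"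
  assumes rf: "rho f = 0" and fnz: "f \<noteq> 0" and two: "(2::'a) \<noteq> 0" and three: "(3::'a) \<noteq> 0"
    and LE: "LE3 f = (a,b,c)"
  shows "3 \<le> b + c"
proof (rule ccontr)
  assume nb: "\<not> 3 \<le> b+c"
  have L: "LEP f (a,b,c)" using LE3_prop[OF fnz] LE by simp
  have cL: "coeff3 f (a,b,c) \<noteq> 0" using L by (simp add: LEP_def)
  have key: "((p,q,r) = (a,b,c) \<or> ds_gr (a,b,c) (p,q,r)) \<and> 6*p+8*q+10*r \<le> n \<and> 25 dvd (n - (6*p+8*q+10*r))"
    if h: "coeff3 f (p,q,r) * ww (p,q,r) n \<noteq> 0" for p q r n
  proof -
    from h have "coeff3 f (p,q,r) \<noteq> 0" "ww (p,q,r) n \<noteq> (0::'a)" by auto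
    then show ?thesis using L unfolding LEP_def by (auto simp: ww_eq split: if_splits dest: EE_dvd)
  qed
  have z: "\<And>n. fps_nth (rho f) n = 0" using rf by simp
  have loc1: "coeff3 f \<alpha> * ww \<alpha> n = 0"
    if "\<And>p q r. coeff3 f (p,q,r) * ww (p,q,r) n \<noteq> 0 \<Longrightarrow> (p,q,r) = \<alpha>" for n \<alpha>
    using rho_local[of "{\<alpha>}" f n] z that by auto
  have loc2: "coeff3 f \<alpha> * ww \<alpha> n + coeff3 f \<beta> * ww \<beta> n = 0"
    if "\<alpha> \<noteq> \<beta>" "\<And>p q r. coeff3 f (p,q,r) * ww (p,q,r) n \<noteq> 0 \<Longrightarrow> (p,q,r) = \<alpha> \<or> (p,q,r) = \<beta>" for n \<alpha> \<beta>
  proof -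
    have "fps_nth (rho f) n = (\<Sum>\<gamma>\<in>{\<alpha>,\<beta>}. coeff3 f \<gamma> * ww \<gamma> n)"
      by (rule rho_local) (use that in auto)
    then show ?thesis using z that(1) by simp
  qed
  have "b=0 \<and> c=0 \<or> b=1 \<and> c=0 \<or> b=0 \<and> c=1 \<or> b=2 \<and> c=0 \<or> b=1 \<and> c=1 \<or> b=0 \<and> c=2"
    using nb by arith
  then show False
  proof (elim disjE conjE)
    assume [simp]: "b=0" "c=0"
    have "coeff3 f (a,0,0) * ww (a,0,0) (6*a) = 0"
    proof (rule loc1)
      fix p q r assume "coeff3 f (p,q,r) * ww (p,q,r) (6*a) \<noteq> 0"
      from key[OF this] show "(p,q,r) = (a,0,0)" using ar00[of p q r a "6*a"] by simp
    qed
    then show False using cL by (simp add: ww_eq EE_0)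
  next
    assume [simp]: "b=1" "c=0"
    have "coeff3 f (a,1,0) * ww (a,1,0) (6*a+8) = 0"
    proof (rule loc1)
      fix p q r assume "coeff3 f (p,q,r) * ww (p,q,r) (6*a+8) \<noteq> 0"
      from key[OF this] show "(p,q,r) = (a,1,0)" using ar10[of p q r a "6*a+8"] by simp
    qed
    then show False using cL by (simp add: ww_eq EE_0)
  next
    assume [simp]: "b=0" "c=1"
    have "coeff3 f (a,0,1) * ww (a,0,1) (6*a+10) = 0"
    proof (rule loc1)
      fix p q r assume "coeff3 f (p,q,r) * ww (p,q,r) (6*a+10) \<noteq> 0"
      from key[OF this] show "(p,q,r) = (a,0,1)" using ar01[of p q r a "6*a+10"] by simp
    qed
    then show False using cL by (simp add: ww_eq EE_0)
  next
    assume [simp]: "b=2" "c=0"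
    have e1: "coeff3 f (a,2,0) * ww (a,2,0) (6*a+16) + coeff3 f (a+1,0,1) * ww (a+1,0,1) (6*a+16) = 0"
    proof (rule loc2)
      fix p q r assume "coeff3 f (p,q,r) * ww (p,q,r) (6*a+16) \<noteq> 0"
      from key[OF this] show "(p,q,r) = (a,2,0) \<or> (p,q,r) = (a+1,0,1)" using ar20[of p q r a "6*a+16"] by simp
    qed simp
    have e2: "coeff3 f (a,2,0) * ww (a,2,0) (6*a+41) + coeff3 f (a+1,0,1) * ww (a+1,0,1) (6*a+41) = 0"
    proof (rule loc2)
      fix p q r assume "coeff3 f (p,q,r) * ww (p,q,r) (6*a+41) \<noteq> 0"
      from key[OF this] show "(p,q,r) = (a,2,0) \<or> (p,q,r) = (a+1,0,1)" using ar20[of p q r a "6*a+41"] by simp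
    qed simp
    have w: "ww (a,2,0) (6*a+16) = (1::'a)" "ww (a+1,0,1) (6*a+16) = (1::'a)"
      "ww (a,2,0) (6*a+41) = (of_nat a::'a)" "ww (a+1,0,1) (6*a+41) = (of_nat (a+1)::'a)"
      by (simp_all add: ww_eq EE_0 EE_25)
    have "coeff3 f (a+1,0,1) = - coeff3 f (a,2,0)" using e1 w by (simp add: add_eq_0_iff)
    then have "coeff3 f (a,2,0) = 0" using e2 w by (simp add: algebra_simps)
    then show False using cL by simp
  next
    assume [simp]: "b=1" "c=1"
    have e1: "coeff3 f (a,1,1) * ww (a,1,1) (6*a+18) + coeff3 f (a+3,0,0) * ww (a+3,0,0) (6*a+18) = 0"
    proof (rule loc2)
      fix p q r assume "coeff3 f (p,q,r) * ww (p,q,r) (6*a+18) \<noteq> 0"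
      from key[OF this] show "(p,q,r) = (a,1,1) \<or> (p,q,r) = (a+3,0,0)" using ar11[of p q r a "6*a+18"] by simp
    qed simp
    have e2: "coeff3 f (a,1,1) * ww (a,1,1) (6*a+43) + coeff3 f (a+3,0,0) * ww (a+3,0,0) (6*a+43) = 0"
    proof (rule loc2)
      fix p q r assume "coeff3 f (p,q,r) * ww (p,q,r) (6*a+43) \<noteq> 0"
      from key[OF this] show "(p,q,r) = (a,1,1) \<or> (p,q,r) = (a+3,0,0)" using ar11[of p q r a "6*a+43"] by simp
    qed simp
    have w: "ww (a,1,1) (6*a+18) = (1::'a)" "ww (a+3,0,0) (6*a+18) = (1::'a)"
      "ww (a,1,1) (6*a+43) = (of_nat a::'a)" "ww (a+3,0,0) (6*a+43) = (of_nat (a+3)::'a)"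
      by (simp_all add: ww_eq EE_0 EE_25)
    have "coeff3 f (a+3,0,0) = - coeff3 f (a,1,1)" using e1 w by (simp add: add_eq_0_iff)
    then have "3 * coeff3 f (a,1,1) = 0" using e2 w by (auto simp: algebra_simps)
    then show False using cL three by simp
  next
    assume [simp]: "b=0" "c=2"
    have e1: "coeff3 f (a,0,2) * ww (a,0,2) (6*a+20) + coeff3 f (a+2,1,0) * ww (a+2,1,0) (6*a+20) = 0"
    proof (rule loc2)
      fix p q r assume "coeff3 f (p,q,r) * ww (p,q,r) (6*a+20) \<noteq> 0"
      from key[OF this] show "(p,q,r) = (a,0,2) \<or> (p,q,r) = (a+2,1,0)" using ar02[of p q r a "6*a+20"] by simp
    qed simp
    have e2: "coeff3 f (a,0,2) * ww (a,0,2) (6*a+45) + coeff3 f (a+2,1,0) * ww (a+2,1,0) (6*a+45) = 0"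
    proof (rule loc2)
      fix p q r assume "coeff3 f (p,q,r) * ww (p,q,r) (6*a+45) \<noteq> 0"
      from key[OF this] show "(p,q,r) = (a,0,2) \<or> (p,q,r) = (a+2,1,0)" using ar02[of p q r a "6*a+45"] by simp
    qed simp
    have w: "ww (a,0,2) (6*a+20) = (1::'a)" "ww (a+2,1,0) (6*a+20) = (1::'a)"
      "ww (a,0,2) (6*a+45) = (of_nat a::'a)" "ww (a+2,1,0) (6*a+45) = (of_nat (a+2)::'a)"
      by (simp_all add: ww_eq EE_0 EE_25)
    have "coeff3 f (a+2,1,0) = - coeff3 f (a,0,2)" using e1 w by (simp add: add_eq_0_iff)
    then have "2 * coeff3 f (a,0,2) = 0" using e2 w by (auto simp: algebra_simps)
    then show False using cL two by simp
  qed
qed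




lemma f1_mon: "(f1 :: 'a::comm_ring_1 ps3) = 3 * mon3 (0,3,0) - 4 * mon3 (1,1,1) + mon3 (4,0,0) - 3 * mon3 (0,3,5) - 2 * mon3 (1,6,2) - mon3 (2,4,3)"
  by (simp add: f1_def mon3_def mult_ac)
lemma f2_mon: "(f2 :: 'a::comm_ring_1 ps3) = 2 * mon3 (0,2,1) - 3 * mon3 (1,0,2) + mon3 (3,1,0) - 2 * mon3 (0,7,2) - mon3 (1,5,3)"
  by (simp add: f2_def mon3_def mult_ac)
lemma f3_mon: "(f3 :: 'a::comm_ring_1 ps3) = mon3 (0,1,2) - 3 * mon3 (2,2,0) + 2 * mon3 (3,0,1) - mon3 (0,6,3) - 2 * mon3 (1,4,4)"
  by (simp add: f3_def mon3_def mult_ac)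
lemma f4_mon: "(f4 :: 'a::comm_ring_1 ps3) = mon3 (0,0,3) - 2 * mon3 (1,3,0) + mon3 (2,1,1) - mon3 (0,5,4)"
  by (simp add: f4_def mon3_def mult_ac)

lemma id1: "3*(s::'a::comm_ring_1) - 4*(s*(1+u)) + s*(1+u)^4 - 3*(s*u^2) - 2*(s*u^2*(1+u)) - s*u^2*(1+u)^2 = 0"
  by (simp add: algebra_simps power2_eq_square power3_eq_cube power4_eq_xxxx)
lemma id2: "2*(s::'a::comm_ring_1) - 3*(s*(1+u)) + s*(1+u)^3 - 2*(s*u^2) - s*u^2*(1+u) = 0"
  by (simp add: algebra_simps power2_eq_square power3_eq_cube)
lemma id3: "(s::'a::comm_ring_1) - 3*(s*(1+u)^2) + 2*(s*(1+u)^3) - s*u^2 - 2*(s*u^2*(1+u)) = 0"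
  by (simp add: algebra_simps power2_eq_square power3_eq_cube)
lemma id4: "(s::'a::comm_ring_1) - 2*(s*(1+u)) + s*(1+u)^2 - s*u^2 = 0"
  by (simp add: algebra_simps power2_eq_square)

lemma rho_f1: "rho (f1 :: 'a::comm_ring_1 ps3) = 0"
proof -
  have e: "(fps_X::'a fps) ^ 74 = fps_X ^ 24 * (fps_X ^ 25) ^ 2" by (simp flip: power_add power_mult)
  have "rho (f1 :: 'a ps3) = 3*fps_X^24 - 4*(fps_X^24*(1+fps_X^25)) + fps_X^24*(1+fps_X^25)^4 - 3*(fps_X^24*(fps_X^25)^2) - 2*(fps_X^24*(fps_X^25)^2*(1+fps_X^25)) - fps_X^24*(fps_X^25)^2*(1+fps_X^25)^2"
    unfolding f1_mon rho_add rho_diff rho_numeral rho_mon3' e[symmetric] by simp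
  then show ?thesis using id1 by metis
qed
lemma rho_f2: "rho (f2 :: 'a::comm_ring_1 ps3) = 0"
proof -
  have e: "(fps_X::'a fps) ^ 76 = fps_X ^ 26 * (fps_X ^ 25) ^ 2" by (simp flip: power_add power_mult)
  have "rho (f2 :: 'a ps3) = 2*fps_X^26 - 3*(fps_X^26*(1+fps_X^25)) + fps_X^26*(1+fps_X^25)^3 - 2*(fps_X^26*(fps_X^25)^2) - fps_X^26*(fps_X^25)^2*(1+fps_X^25)"
    unfolding f2_mon rho_add rho_diff rho_numeral rho_mon3' e[symmetric] by simp
  then show ?thesis using id2 by metis
qed
lemma rho_f3: "rho (f3 :: 'a::comm_ring_1 ps3) = 0"
proof -
  have e: "(fps_X::'a fps) ^ 78 = fps_X ^ 28 * (fps_X ^ 25) ^ 2" by (simp flip: power_add power_mult)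
  have "rho (f3 :: 'a ps3) = fps_X^28 - 3*(fps_X^28*(1+fps_X^25)^2) + 2*(fps_X^28*(1+fps_X^25)^3) - fps_X^28*(fps_X^25)^2 - 2*(fps_X^28*(fps_X^25)^2*(1+fps_X^25))"
    unfolding f3_mon rho_add rho_diff rho_numeral rho_mon3' e[symmetric] by simp
  then show ?thesis using id3 by metis
qed
lemma rho_f4: "rho (f4 :: 'a::comm_ring_1 ps3) = 0"
proof -
  have e: "(fps_X::'a fps) ^ 80 = fps_X ^ 30 * (fps_X ^ 25) ^ 2" by (simp flip: power_add power_mult)
  have "rho (f4 :: 'a ps3) = fps_X^30 - 2*(fps_X^30*(1+fps_X^25)) + fps_X^30*(1+fps_X^25)^2 - fps_X^30*(fps_X^25)^2"
    unfolding f4_mon rho_add rho_diff rho_numeral rho_mon3' e[symmetric] by simp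
  then show ?thesis using id4 by metis
qed

lemmas coeff3_simps = coeff3_add coeff3_diff coeff3_numeral coeff3_mon3

lemma LE_f1: assumes "(3::'a::comm_ring_1) \<noteq> 0" shows "LEP (f1::'a ps3) (0,3,0)"
  unfolding LEP_def f1_mon coeff3_simps using assms by (auto simp: ds_gr_def split: if_splits)
lemma LE_f2: assumes "(2::'a::comm_ring_1) \<noteq> 0" shows "LEP (f2::'a ps3) (0,2,1)"
  unfolding LEP_def f2_mon coeff3_simps using assms by (auto simp: ds_gr_def split: if_splits)
lemma LE_f3: "LEP (f3::'a::comm_ring_1 ps3) (0,1,2)"
  unfolding LEP_def f3_mon coeff3_simps by (auto simp: ds_gr_def split: if_splits)
lemma LE_f4: "LEP (f4::'a::comm_ring_1 ps3) (0,0,3)"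
  unfolding LEP_def f4_mon coeff3_simps by (auto simp: ds_gr_def split: if_splits)

lemma LEP_nz: "LEP f \<alpha> \<Longrightarrow> f \<noteq> 0"
  unfolding LEP_def using coeff3_zero by metis

lemma module_mult: "module ((*) :: 'a::comm_ring_1 \<Rightarrow> 'a \<Rightarrow> 'a)"
  unfolding module_def by (simp add: algebra_simps)

lemma mon3_mult: "mon3 (a,b,c) * mon3 (a',b',c') = (mon3 (a+a', b+b', c+c') :: 'a::comm_ring_1 ps3)"
  by (simp add: mon3_def power_add mult_ac)

definition MM :: "'a::comm_ring_1 ps3 set" where
  "MM = {mon3 (0,3,0), mon3 (0,2,1), mon3 (0,1,2), mon3 (0,0,3)}"

lemma mul_in: "m \<in> MM \<Longrightarrow> x * m \<in> ideal_gen MM"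
  unfolding ideal_gen_def
  using module.span_scale[OF module_mult module.span_base[OF module_mult]] by blast

lemma mon_in: assumes "3 \<le> b + c" shows "(mon3 (a,b,c) :: 'a::comm_ring_1 ps3) \<in> ideal_gen MM"
proof -
  have "b \<ge> 3 \<or> (b = 2 \<and> c \<ge> 1) \<or> (b = 1 \<and> c \<ge> 2) \<or> (b = 0 \<and> c \<ge> 3)" using assms by arith
  then show ?thesis
  proof (elim disjE conjE)
    assume hb: "b \<ge> 3"
    have e1: "(mon3 (a,b-3,c) :: 'a ps3) * mon3 (0,3,0) = mon3 (a+0, b-3+3, c+0)" by (rule mon3_mult)
    have e2: "(a+0, b-3+3, c+0) = (a,b,c)" using hb by simp
    have "(mon3 (a,b,c) :: 'a ps3) = mon3 (a,b-3,c) * mon3 (0,3,0)" using e1 e2 by metis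
    moreover have "mon3 (0,3,0) \<in> (MM :: 'a ps3 set)" by (simp add: MM_def)
    ultimately show ?thesis using mul_in by metis
  next
    assume hb: "b = 2" "c \<ge> 1"
    have e1: "(mon3 (a,0,c-1) :: 'a ps3) * mon3 (0,2,1) = mon3 (a+0, 0+2, c-1+1)" by (rule mon3_mult)
    have e2: "(a+0, 0+2, c-1+1) = (a,b,c)" using hb by simp
    have "(mon3 (a,b,c) :: 'a ps3) = mon3 (a,0,c-1) * mon3 (0,2,1)" using e1 e2 by metis
    moreover have "mon3 (0,2,1) \<in> (MM :: 'a ps3 set)" by (simp add: MM_def)
    ultimately show ?thesis using mul_in by metis
  next
    assume hb: "b = 1" "c \<ge> 2"
    have e1: "(mon3 (a,0,c-2) :: 'a ps3) * mon3 (0,1,2) = mon3 (a+0, 0+1, c-2+2)" by (rule mon3_mult)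
    have e2: "(a+0, 0+1, c-2+2) = (a,b,c)" using hb by simp
    have "(mon3 (a,b,c) :: 'a ps3) = mon3 (a,0,c-2) * mon3 (0,1,2)" using e1 e2 by metis
    moreover have "mon3 (0,1,2) \<in> (MM :: 'a ps3 set)" by (simp add: MM_def)
    ultimately show ?thesis using mul_in by metis
  next
    assume hb: "b = 0" "c \<ge> 3"
    have e1: "(mon3 (a,0,c-3) :: 'a ps3) * mon3 (0,0,3) = mon3 (a+0, 0+0, c-3+3)" by (rule mon3_mult)
    have e2: "(a+0, 0+0, c-3+3) = (a,b,c)" using hb by simp
    have "(mon3 (a,b,c) :: 'a ps3) = mon3 (a,0,c-3) * mon3 (0,0,3)" using e1 e2 by metis
    moreover have "mon3 (0,0,3) \<in> (MM :: 'a ps3 set)" by (simp add: MM_def)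
    ultimately show ?thesis using mul_in by metis
  qed
qed


lemma char_ne: assumes "CHAR('a::field) = 0 \<or> CHAR('a) \<ge> 5" and "0 < n" "n < 5"
  shows "(of_nat n :: 'a) \<noteq> 0"
proof
  assume "(of_nat n :: 'a) = 0"
  then have "CHAR('a) dvd n" by (simp only: of_nat_eq_0_iff_char_dvd)
  with assms show False by (auto dest: dvd_imp_le)
qed

theorem mainTheorem10:
  assumes "CHAR('a::field) = 0 \<or> CHAR('a) \<ge> 5"
  shows "standard_basis {f1 :: 'a ps3, f2, f3, f4} Pker"
proof -
  have two: "(2::'a) \<noteq> 0" using char_ne[OF assms, of 2] by simp
  have three: "(3::'a) \<noteq> 0" using char_ne[OF assms, of 3] by simp
  have L1: "LEP (f1::'a ps3) (0,3,0)" by (rule LE_f1[OF three])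
  have L2: "LEP (f2::'a ps3) (0,2,1)" by (rule LE_f2[OF two])
  have L3: "LEP (f3::'a ps3) (0,1,2)" by (rule LE_f3)
  have L4: "LEP (f4::'a ps3) (0,0,3)" by (rule LE_f4)
  have P: "f1 \<in> (Pker :: 'a ps3 set)" "f2 \<in> (Pker :: 'a ps3 set)" "f3 \<in> (Pker :: 'a ps3 set)" "f4 \<in> (Pker :: 'a ps3 set)"
    by (simp_all add: Pker_def rho_f1 rho_f2 rho_f3 rho_f4)
  have N: "(f1::'a ps3) \<noteq> 0" "(f2::'a ps3) \<noteq> 0" "(f3::'a ps3) \<noteq> 0" "(f4::'a ps3) \<noteq> 0"
    using LEP_nz L1 L2 L3 L4 by blast+
  have LM: "LM3 (f1::'a ps3) = mon3 (0,3,0)" "LM3 (f2::'a ps3) = mon3 (0,2,1)"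
    "LM3 (f3::'a ps3) = mon3 (0,1,2)" "LM3 (f4::'a ps3) = mon3 (0,0,3)"
    unfolding LM3_def using LE3_eq L1 L2 L3 L4 by metis+
  let ?G = "{LM3 g |g. g \<in> {f1 :: 'a ps3, f2, f3, f4} \<and> g \<noteq> 0}"
  let ?I = "{LM3 f |f. f \<in> (Pker :: 'a ps3 set) \<and> f \<noteq> 0}"
  have G: "?G = MM"
  proof
    show "?G \<subseteq> MM" using LM by (auto simp: MM_def)
    show "MM \<subseteq> ?G"
    proof
      fix x assume "x \<in> (MM :: 'a ps3 set)"
      then have "x = LM3 f1 \<or> x = LM3 f2 \<or> x = LM3 f3 \<or> x = LM3 (f4 :: 'a ps3)"
        using LM by (auto simp: MM_def)
      then show "x \<in> ?G" using N by blast
    qed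
  qed
  have MI: "(MM :: 'a ps3 set) \<subseteq> ?I"
  proof
    fix x assume "x \<in> (MM :: 'a ps3 set)"
    then have "x = LM3 f1 \<or> x = LM3 f2 \<or> x = LM3 f3 \<or> x = LM3 (f4 :: 'a ps3)"
      using LM by (auto simp: MM_def)
    then show "x \<in> ?I" using N P by blast
  qed
  have IM: "?I \<subseteq> ideal_gen MM"
  proof
    fix x assume "x \<in> ?I"
    then obtain f where f: "x = LM3 f" "f \<in> (Pker :: 'a ps3 set)" "f \<noteq> 0" by blast
    obtain a b c where abc: "LE3 f = (a,b,c)" by (cases "LE3 f") auto
    have "3 \<le> b + c"
      using main_LE[of f a b c] f abc two three by (simp add: Pker_def)
    then show "x \<in> ideal_gen MM" using mon_in f(1) abc by (simp add: LM3_def)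
  qed
  have "ideal_gen ?G = ideal_gen ?I"
  proof
    show "ideal_gen ?G \<subseteq> ideal_gen ?I"
      unfolding G ideal_gen_def by (rule module.span_mono[OF module_mult MI])
    have "ideal_gen ?I \<subseteq> ideal_gen (ideal_gen (MM :: 'a ps3 set))"
      unfolding ideal_gen_def by (rule module.span_mono[OF module_mult IM[unfolded ideal_gen_def]])
    also have "\<dots> = ideal_gen MM" unfolding ideal_gen_def by (rule module.span_span[OF module_mult])
    finally show "ideal_gen ?I \<subseteq> ideal_gen ?G" unfolding G .
  qed
  then show ?thesis unfolding standard_basis_def using P by auto
qed

end
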